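(* Let $g=\frac{\sqrt5-1}2$, $g\le\alpha<\beta\le1$, and $(x,y)\in\Omega_\alpha$ with $y<1-\frac1{\sqrt2}$. Then $S(x,y)\cap\Omega_\beta\ne\emptyset$.
   Context: For $\alpha\in[\tfrac12,1]$: $T_\alpha(x)=\frac1x-\lfloor\frac1x+1-\alpha\rfloor$ on $[\alpha-1,\alpha)\setminus\{0\}$, $T_\alpha(0)=0$; $\mathcal T_\alpha(x,y)=\left(T_\alpha(x),\frac{1}{y+\lfloor\frac1x+1-\alpha\rfloor}\right)$ for $x\ne0$, $\mathcal T_\alpha(0,y)=(0,0)$; $\Omega_\alpha=\bigcup_{n\ge0}\overline{\mathcal T_\alpha^n([\alpha-1,\alpha)\times\{0\})}$. For a point $(x,y)$, $S(x,y)=\{(x,y),(-x,-y),(x+1,\frac{y}{1-y}),(1-x,\frac{-y}{y+1})\}$. *)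

theory Defs
  imports "HOL-Analysis.Analysis"
begin

text \<open>The alpha-continued fraction map T_alpha (intended domain [alpha-1, alpha)).\<close>
definition Talpha :: "real \<Rightarrow> real \<Rightarrow> real" where
  "Talpha \<alpha> x = (if x = 0 then 0 else 1 / x - of_int \<lfloor>1 / x + 1 - \<alpha>\<rfloor>)"

definition TTalpha :: "real \<Rightarrow> real \<times> real \<Rightarrow> real \<times> real" where
  "TTalpha \<alpha> p = (if fst p = 0 then (0, 0)
     else (Talpha \<alpha> (fst p), 1 / (snd p + of_int \<lfloor>1 / fst p + 1 - \<alpha>\<rfloor>)))"

definition Omega :: "real \<Rightarrow> (real \<times> real) set" where
  "Omega \<alpha> = (\<Union>n::nat. closure ((TTalpha \<alpha> ^^ n) ` ({\<alpha> - 1..<\<alpha>} \<times> {0})))"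

definition Sset :: "real \<Rightarrow> real \<Rightarrow> (real \<times> real) set" where
  "Sset x y = {(x, y), (-x, -y), (x + 1, y / (1 - y)), (1 - x, - y / (y + 1))}"

end

theory Submission
  imports Defs
begin


definition cc :: real where "cc = 1 - 1/sqrt 2"
definition Bs :: "real \<Rightarrow> (real\<times>real) set" where "Bs b = {b-1..<b} \<times> {0}"
definition Orb :: "real \<Rightarrow> nat \<Rightarrow> (real\<times>real) set" where "Orb b m = (TTalpha b ^^ m) ` Bs b"

lemma TT_eq: "x \<noteq> 0 \<Longrightarrow> TTalpha a (x,y) = (1/x - of_int \<lfloor>1/x + 1 - a\<rfloor>, 1/(y + of_int \<lfloor>1/x+1-a\<rfloor>))"
  by (simp add: TTalpha_def Talpha_def)

lemma TT_zero: "TTalpha a (0,y) = (0,0)"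
  by (simp add: TTalpha_def)

lemma TT_range: assumes "0 < b" "b \<le> 1" shows "fst (TTalpha b p) \<in> {b-1..<b}"
proof (cases "fst p = 0")
  case True thus ?thesis using assms by (simp add: TTalpha_def)
next
  case False
  have "of_int \<lfloor>1/fst p + 1 - b\<rfloor> \<le> 1/fst p + 1 - b" by (rule of_int_floor_le)
  moreover have "1/fst p + 1 - b < of_int \<lfloor>1/fst p + 1 - b\<rfloor> + 1" by (rule real_of_int_floor_add_one_gt)
  ultimately show ?thesis using False by (simp add: TTalpha_def Talpha_def) linarith
qed

lemma Orb_Suc: "q \<in> Orb b m \<Longrightarrow> TTalpha b q \<in> Orb b (Suc m)"
  unfolding Orb_def by auto

lemma Orb_range: assumes "0 < b" "b \<le> 1" "q \<in> Orb b m" shows "fst q \<in> {b-1..<b}"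
proof (cases m)
  case 0 thus ?thesis using assms by (auto simp: Orb_def Bs_def)
next
  case (Suc k)
  from assms(3) obtain z where q: "q = (TTalpha b ^^ m) z" unfolding Orb_def by auto
  then have "q = TTalpha b ((TTalpha b ^^ k) z)" using Suc by simp
  thus ?thesis using TT_range[OF assms(1,2)] by metis
qed

lemma zero_Orb: "0 < b \<Longrightarrow> b \<le> 1 \<Longrightarrow> (0,0) \<in> Orb b 0"
  by (auto simp: Orb_def Bs_def)

lemma int_test: fixes a b :: int assumes "real_of_int a + of_int b < 1" "real_of_int a + of_int b > -2" shows "a + b = 0 \<or> a + b = -1"
proof -
  have "a + b < 1" using assms(1) by (metis of_int_add of_int_less_1_iff)
  moreover have "a + b > -2" using assms(2)
    by (metis of_int_add of_int_less_iff of_int_minus of_int_numeral)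
  ultimately show ?thesis by linarith
qed



lemma g_bound: fixes a :: real assumes "a*a+a \<ge> 1" "0 < a" shows "a \<ge> (309/500)"
proof (rule ccontr)
  assume "\<not> a \<ge> (309/500)"
  hence h: "a < (309/500)" by simp
  have "a*a < (309/500)*a" using h assms(2) by (simp add: mult_strict_right_mono)
  thus False using assms h by linarith
qed

lemma neg_dig: fixes a :: real assumes "a \<ge> (309/500)" "a < 1" shows "1/(a-1) + 1 - a < -2"
proof -
  define d where "d = 1 - a"
  have d: "0 < d" "d \<le> (191/500)" using assms by (auto simp: d_def)
  have h1: "d*d \<le> (191/500)*d" using d by (intro mult_right_mono) auto
  have h2: "d*(d+2) = d*d + 2*d" by (simp add: algebra_simps)
  have h3: "d*(d+2) < 1" using d h1 h2 by linarith
  have h4: "d + 2 < 1/d" using d h3 by (simp add: pos_less_divide_eq mult.commute)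
  have h5: "1/(a-1) = - (1/d)" by (simp add: d_def divide_simps)
  show ?thesis using h4 h5 unfolding d_def by linarith
qed

lemma sq5: fixes a :: real assumes "(sqrt 5 - 1)/2 \<le> a" shows "a*a+a \<ge> 1"
proof -
  define g where "g = (sqrt 5 - 1)/2"
  have s: "sqrt 5 * sqrt 5 = 5" by simp
  have s1: "sqrt 5 > 1" by simp
  have h1: "a*a+a-1 = (a-g)*(a+g+1)" unfolding g_def using s by (simp add: algebra_simps) (simp add: field_simps)
  have h2: "a - g \<ge> 0" using assms unfolding g_def by auto
  have g0: "g > 0" using s1 unfolding g_def by simp
  have h3: "a+g+1 \<ge> 0" using assms g0 unfolding g_def[symmetric] by linarith
  have "(a-g)*(a+g+1) \<ge> 0" using h2 h3 by simp
  thus ?thesis using h1 by linarith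
qed

lemma digit: fixes a x :: real assumes "a \<ge> (309/500)" "a < 1" "a-1 \<le> x" "x < a" "x \<noteq> 0"
  shows "(0 < x \<and> 1 \<le> \<lfloor>1/x+1-a\<rfloor>) \<or> (x < 0 \<and> \<lfloor>1/x+1-a\<rfloor> \<le> -3)"
proof (cases "x > 0")
  case True
  have "1/x > 1/a" using True assms by (intro frac_less2) auto
  moreover have "1/a \<ge> a"
  proof -
    have "a*a \<le> 1" using assms by (intro mult_le_one) auto
    thus ?thesis using assms by (simp add: field_simps)
  qed
  ultimately have "1/x + 1 - a \<ge> 1" by linarith
  thus ?thesis using True by (simp add: le_floor_iff)
next
  case False
  hence xn: "x < 0" using assms by simp
  have "1/(1-a) \<le> 1/(-x)" using xn assms by (intro frac_le) auto
  moreover have "1/(a-1) = -(1/(1-a))" using assms by (simp add: field_simps)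
  moreover have "1/x = -(1/(-x))" by simp
  ultimately have "1/x \<le> 1/(a-1)" by linarith
  hence "1/x + 1 - a < -2" using neg_dig[OF assms(1,2)] by linarith
  thus ?thesis using xn by (simp add: floor_le_iff)
qed



definition DD :: "real \<Rightarrow> real\<times>real \<Rightarrow> bool" where
  "DD a p \<longleftrightarrow> -1/2 \<le> snd p \<and> snd p \<le> sqrt 2 \<and> (fst p > 3 + 1/(a-1) \<longrightarrow> snd p \<ge> 1/sqrt 2 - 1)
     \<and> (fst p < 1/a - 1 \<longrightarrow> snd p \<le> 2 - sqrt 2)"

lemma s2: "sqrt 2 * sqrt 2 = 2" "sqrt 2 > (141/100)" "sqrt 2 < (142/100)"
proof -
  show "sqrt 2 * sqrt 2 = 2" by simp
  show "sqrt 2 > (141/100)" by (rule real_less_rsqrt) (simp add: power2_eq_square)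
  show "sqrt 2 < (142/100)" by (rule real_less_lsqrt) (simp_all add: power2_eq_square)
qed

lemma s2id: "1/(1/sqrt 2) = sqrt 2" "1/(1 + 1/sqrt 2) = 2 - sqrt 2" "1/(2 + sqrt 2) = 1 - 1/sqrt 2"
   "1/sqrt 2 = sqrt 2 / 2"
proof -
  have a: "sqrt 2 * sqrt 2 = 2" by simp
  have p: "sqrt 2 > 0" by simp
  show "1/(1/sqrt 2) = sqrt 2" by simp
  show "1/sqrt 2 = sqrt 2 / 2" using a p by (simp add: field_simps)
  have h: "(2 - sqrt 2) * (1 + 1/sqrt 2) = 1" using a p by (simp add: field_simps algebra_simps)
  have n: "1 + 1/sqrt 2 \<noteq> 0" using p by (smt (verit) divide_pos_pos)
  show "1/(1 + 1/sqrt 2) = 2 - sqrt 2" using h n by (simp add: divide_eq_eq)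
  have h2: "(1 - 1/sqrt 2) * (2 + sqrt 2) = 1" using a p by (simp add: field_simps algebra_simps)
  have n2: "2 + sqrt 2 \<noteq> 0" using p by linarith
  show "1/(2 + sqrt 2) = 1 - 1/sqrt 2" using h2 n2 by (simp add: divide_eq_eq)
qed

lemma t1_le: fixes a :: real assumes "a*a+a \<ge> 1" "a < 1" "0 < a" shows "3 + 1/(a-1) \<le> 1/(2+a)"
proof -
  have "3 + 1/(a-1) = (2 - 3*a)/(1-a)" using assms by (simp add: field_simps)
  moreover have "(2-3*a)*(2+a) \<le> 1 - a" using assms by (simp add: algebra_simps)
  hence "(2 - 3*a)/(1-a) \<le> 1/(2+a)" using assms by (simp add: field_simps)
  ultimately show ?thesis by simp
qed



lemma inv_le_pos: fixes A B :: real shows "0 < B \<Longrightarrow> B \<le> A \<Longrightarrow> 1/A \<le> 1/B"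
  by (simp add: frac_le)

lemma inv_ge_neg: fixes A B :: real shows "A \<le> B \<Longrightarrow> B < 0 \<Longrightarrow> 1/B \<le> 1/A"
proof -
  assume h: "A \<le> B" "B < 0"
  have "1/(-A) \<le> 1/(-B)" using h by (intro frac_le) auto
  thus ?thesis by simp
qed

lemma D_step: fixes a x y :: real
  assumes a: "a \<ge> 309/500" "a < 1" "a*a+a \<ge> 1" and x: "a-1 \<le> x" "x < a" and D: "DD a (x,y)"
  shows "DD a (TTalpha a (x,y))"
proof (cases "x = 0")
  case True
  have "1/sqrt 2 < 1" by simp
  thus ?thesis using True s2 by (simp add: TT_zero DD_def)
next
  case False
  define k where "k = \<lfloor>1/x+1-a\<rfloor>"
  have TT: "TTalpha a (x,y) = (1/x - k, 1/(y+k))" using False by (simp add: TT_eq k_def)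
  have kf: "of_int k \<le> 1/x+1-a" "1/x+1-a < of_int k + 1" unfolding k_def by linarith+
  have Dy: "-1/2 \<le> y" "y \<le> sqrt 2" "x > 3 + 1/(a-1) \<Longrightarrow> y \<ge> 1/sqrt 2 - 1" "x < 1/a - 1 \<Longrightarrow> y \<le> 2 - sqrt 2"
    using D by (auto simp: DD_def)
  have ia: "1/a \<ge> 1" using a by simp
  have sq: "sqrt 2 > (141/100)" "sqrt 2 < (142/100)" "1/sqrt 2 < (71/100)" "1/sqrt 2 > (7/10)"
    using s2 s2id(4) by auto
  from digit[OF a(1,2) x False] have "(0 < x \<and> 1 \<le> k) \<or> (x < 0 \<and> k \<le> -3)" unfolding k_def .
  thus ?thesis
  proof
    assume pos: "0 < x \<and> 1 \<le> k"
    hence xp: "x > 0" and k1: "real_of_int k \<ge> 1" by auto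
    have xt: "x > 3 + 1/(a-1)" if "k \<le> 2"
    proof -
      have "1/x < 2 + a" using kf that by linarith
      hence "1/(2+a) < x" using xp a by (simp add: field_simps)
      thus ?thesis using t1_le[of a] a by linarith
    qed
    have ypos: "1/(y+k) > 0" using Dy k1 by simp
    have yle: "1/(y+k) \<le> sqrt 2"
    proof (cases "k = 1")
      case True
      hence "y \<ge> 1/sqrt 2 - 1" using xt Dy by simp
      hence "1/(y+k) \<le> 1/(1/sqrt 2)" using True by (intro inv_le_pos) auto
      thus ?thesis using s2id by simp
    next
      case False
      hence "real_of_int k \<ge> 2" using k1 by simp
      hence "1/(y+k) \<le> 1/(3/2)" using Dy by (intro inv_le_pos) auto
      thus ?thesis using sq by simp
    qed
    have y3: "1/(y+k) \<le> 2 - sqrt 2" if "1/x - k < 1/a - 1"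
    proof (cases "k = 1")
      case True
      have "1/x > 1/a" using xp x a by (intro frac_less2) auto
      thus ?thesis using that True by simp
    next
      case kn1: False
      show ?thesis
      proof (cases "k = 2")
        case True
        hence "y \<ge> 1/sqrt 2 - 1" using xt Dy by simp
        hence "1/(y+k) \<le> 1/(1 + 1/sqrt 2)" using True sq by (intro inv_le_pos) auto
        thus ?thesis using s2id by simp
      next
        case False
        hence "real_of_int k \<ge> 3" using k1 kn1 by simp
        hence "1/(y+k) \<le> 1/(5/2)" using Dy by (intro inv_le_pos) auto
        thus ?thesis using sq by simp
      qed
    qed
    have f1: "-1/2 \<le> 1/(y+k)" using ypos by linarith
    have f2: "1/sqrt 2 - 1 \<le> 1/(y+k)" using ypos sq by linarith
    show ?thesis unfolding TT DD_def fst_conv snd_conv using f1 f2 yle y3 by blast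
  next
    assume neg: "x < 0 \<and> k \<le> -3"
    hence xn: "x < 0" and k3: "real_of_int k \<le> -3" by auto
    have yy: "y \<le> 2 - sqrt 2" using Dy(4) xn ia by linarith
    have yneg: "1/(y+k) < 0" using yy k3 sq by (simp add: divide_less_0_iff)
    have ylo: "1/(y+k) \<ge> -1/2"
    proof -
      have "1/(-2) \<le> 1/(y+k)" using yy k3 sq by (intro inv_ge_neg) auto
      thus ?thesis by simp
    qed
    have y2: "1/(y+k) \<ge> 1/sqrt 2 - 1" if "1/x - k > 3 + 1/(a-1)"
    proof (cases "k = -3")
      case True
      have "1/(1-a) \<le> 1/(-x)" using xn x a by (intro frac_le) auto
      moreover have "1/(a-1) = -(1/(1-a))" using a by (simp add: field_simps)
      moreover have "1/x = -(1/(-x))" by simp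
      ultimately have "1/x \<le> 1/(a-1)" by linarith
      thus ?thesis using that True by simp
    next
      case False
      hence "real_of_int k \<le> -4" using k3 by simp
      hence "1/(-(2 + sqrt 2)) \<le> 1/(y+k)" using yy sq by (intro inv_ge_neg) auto
      moreover have "1/(-(2 + sqrt 2)) = 1/sqrt 2 - 1"
        unfolding divide_minus_right s2id(3) by simp
      ultimately show ?thesis by simp
    qed
    have f3: "1/(y+k) \<le> sqrt 2" "1/(y+k) \<le> 2 - sqrt 2" using yneg sq by linarith+
    show ?thesis unfolding TT DD_def fst_conv snd_conv using ylo y2 f3 by blast
  qed
qed



definition Rel :: "real\<times>real \<Rightarrow> real\<times>real \<Rightarrow> bool" where
  "Rel p q \<longleftrightarrow> q = p \<or> q = (-fst p, -snd p) \<or> q = (fst p + 1, snd p/(1 - snd p))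
     \<or> q = (1 - fst p, - snd p/(snd p + 1)) \<or> (q = (-fst p/(fst p+1), 1 - snd p) \<and> cc \<le> snd p)
     \<or> (q = (fst p/(fst p+1), snd p - 1) \<and> cc \<le> snd p)"

lemma Rel_id: "Rel p p" by (simp add: Rel_def)
lemma Rel_NEG: "Rel (X,Y) (-X,-Y)" by (simp add: Rel_def)
lemma Rel_P: "Rel (X,Y) (X+1, Y/(1-Y))" by (simp add: Rel_def)
lemma Rel_R: "Rel (X,Y) (1-X, -Y/(Y+1))" by (simp add: Rel_def)
lemma Rel_G1: "cc \<le> Y \<Longrightarrow> Rel (X,Y) (-X/(X+1), 1-Y)" by (simp add: Rel_def)
lemma Rel_G2: "cc \<le> Y \<Longrightarrow> Rel (X,Y) (X/(X+1), Y-1)" by (simp add: Rel_def)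

lemma h_P: fixes Y :: real shows "Y \<noteq> 0 \<Longrightarrow> (1/Y)/(1 - 1/Y) = 1/(Y-1)"
  by (cases "Y = 1") (simp_all add: field_simps)

lemma h_R: fixes Y :: real shows "Y \<noteq> 0 \<Longrightarrow> Y + 1 \<noteq> 0 \<Longrightarrow> -(1/Y)/(1/Y + 1) = 1/(-Y-1)"
proof -
  assume h: "Y \<noteq> 0" "Y + 1 \<noteq> 0"
  hence h2: "-Y-1 \<noteq> 0" by linarith
  have "1/Y + 1 = (Y+1)/Y" using h by (simp add: field_simps)
  thus ?thesis using h h2 by (simp add: field_simps)
qed

lemma ilt: fixes j k c :: int shows "real_of_int j < real_of_int k + real_of_int c \<Longrightarrow> j < k + c"
  by (metis of_int_add of_int_less_iff)

lemma cc_eq: "cc = 1/(2 + sqrt 2)" using s2id(3) by (simp add: cc_def)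

locale prm =
  fixes a b :: real
  assumes a1: "a \<ge> 309/500" and a2: "a < 1" and a3: "a*a+a \<ge> 1" and ab: "a < b" and b1: "b \<le> 1"
begin

lemma pos: "0 < a" "0 < b" using a1 ab by auto

lemma abf: "1/a < 1 + b" "1/b < 1 + a" "a + b > 1" "b - a < 1"
proof -
  have "a*a < a*b" using pos ab by simp
  hence "1 < a*(1+b)" using a3 by (simp add: algebra_simps)
  thus "1/a < 1 + b" using pos by (simp add: field_simps)
  have e: "b*(1+a) = b + a*b" by (simp add: algebra_simps)
  have "1 < b*(1+a)" using a3 \<open>a*a < a*b\<close> ab e by linarith
  thus "1/b < 1 + a" using pos by (simp add: field_simps)
  show "a + b > 1" "b - a < 1" using a1 ab b1 by auto
qed

lemma ptf:
  assumes x: "a-1 \<le> x" "x < a" "x \<noteq> 0" and D: "DD a (x,y)"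
  shows "y + of_int \<lfloor>1/x+1-a\<rfloor> \<noteq> 0" "y + of_int \<lfloor>1/x+1-a\<rfloor> + 1 \<noteq> 0"
    "x > 0 \<Longrightarrow> \<lfloor>1/x+1-a\<rfloor> \<ge> 1" "x < 0 \<Longrightarrow> y \<le> 2 - sqrt 2"
    "-1/2 \<le> y" "y \<le> sqrt 2" "x + 1 > 0"
proof -
  define k where "k = \<lfloor>1/x+1-a\<rfloor>"
  have Dy: "-1/2 \<le> y" "y \<le> sqrt 2" "x < 1/a - 1 \<Longrightarrow> y \<le> 2 - sqrt 2"
    using D by (auto simp: DD_def)
  have ia: "1/a \<ge> 1" using a2 pos by simp
  have sq: "sqrt 2 > 141/100" "sqrt 2 < 142/100" using s2 by auto
  have d: "(0 < x \<and> 1 \<le> k) \<or> (x < 0 \<and> k \<le> -3)" using digit[OF a1 a2 x] unfolding k_def .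
  show "y + of_int k \<noteq> 0" "y + of_int k + 1 \<noteq> 0"
  proof -
    from d have "(y + of_int k > 0 \<and> y + of_int k + 1 > 0) \<or> (y + of_int k < 0 \<and> y + of_int k + 1 < 0)"
    proof
      assume "0 < x \<and> 1 \<le> k" thus ?thesis using Dy by simp
    next
      assume h: "x < 0 \<and> k \<le> -3"
      hence "y \<le> 2 - sqrt 2" using Dy ia by linarith
      thus ?thesis using h sq by simp
    qed
    thus "y + of_int k \<noteq> 0" "y + of_int k + 1 \<noteq> 0" by auto
  qed
  show "x > 0 \<Longrightarrow> k \<ge> 1" using d by auto
  show "x < 0 \<Longrightarrow> y \<le> 2 - sqrt 2" using Dy ia by linarith
  show "-1/2 \<le> y" "y \<le> sqrt 2" using Dy by auto
  show "x + 1 > 0" using x a1 by linarith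
qed

end



context prm begin

lemma G1core:
  assumes x: "a-1 \<le> x" "x < a" "x \<noteq> 0" and D: "DD a (x,y)"
    and q: "(-x/(x+1), 1-y) \<in> Orb b m"
  shows "\<exists>q'. q' \<in> Orb b (Suc m) \<and> Rel (TTalpha a (x,y)) q'"
proof -
  define u where "u = 1/x"
  define k where "k = \<lfloor>u+1-a\<rfloor>"
  have TTa: "TTalpha a (x,y) = (u - k, 1/(y+k))" using TT_eq x(3) by (simp add: u_def k_def)
  have kf: "of_int k \<le> u+1-a" "u+1-a < of_int k + 1" unfolding k_def by linarith+
  have yk: "y + k \<noteq> 0" "y + k + 1 \<noteq> 0" using ptf[OF x D] unfolding u_def k_def by auto
  have xp1: "x + 1 > 0" using ptf[OF x D] by auto
  have qx: "-x/(x+1) \<noteq> 0" using x(3) xp1 by simp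
  have inv: "1/(-x/(x+1)) = -1 - u" using x(3) xp1 by (simp add: u_def field_simps)
  define j where "j = \<lfloor>-u-b\<rfloor>"
  have jf: "of_int j \<le> -u-b" "-u-b < of_int j + 1" unfolding j_def by linarith+
  have TTb: "TTalpha b (-x/(x+1), 1-y) = (-1-u-j, 1/(1-y+j))"
  proof -
    have fl: "1/(-x/(x+1)) + 1 - b = -u - b" using inv by simp
    have fl2: "-1 - u + 1 - b = -u - b" by simp
    show ?thesis by (simp only: TT_eq[OF qx] fl fl2 inv j_def)
  qed
  have r1: "real_of_int (j+k) < 0" using jf kf abf by simp
  have r2: "real_of_int (j+k) > -3" using jf kf a2 b1 by simp
  have "j + k < 0" using r1 by simp
  moreover have "j + k > -3" using r2 by simp
  ultimately have jk: "j + k = -1 \<or> j + k = -2" by linarith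
  have mem: "TTalpha b (-x/(x+1), 1-y) \<in> Orb b (Suc m)" using q by (rule Orb_Suc)
  from jk show ?thesis
  proof
    assume h: "j + k = -1"
    hence "TTalpha b (-x/(x+1), 1-y) = (-(u-k), -(1/(y+k)))"
    proof -
      have jj: "real_of_int j = -1 - of_int k" using h by (metis add.commute diff_eq_eq of_int_add of_int_minus of_int_1 of_int_diff)
      have e1: "1 - y + (-1 - of_int k) = -(y + of_int k)" by simp
      have e2: "1/(-(y + of_int k)) = -(1/(y + of_int k))" by (rule divide_minus_right)
      show ?thesis unfolding TTb jj e1 e2 by simp
    qed
    thus ?thesis using mem Rel_NEG TTa by metis
  next
    assume h: "j + k = -2"
    hence "TTalpha b (-x/(x+1), 1-y) = (1-(u-k), -(1/(y+k))/(1/(y+k) + 1))"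
    proof -
      have jj: "real_of_int j = -2 - of_int k" using h by (metis add.commute diff_eq_eq of_int_add of_int_minus of_int_numeral of_int_diff)
      have "1 - y + (-2 - of_int k) = -(y + of_int k) - 1" by simp
      moreover have "-(1/(y+k))/(1/(y+k) + 1) = 1/(-(y+k)-1)" using h_R yk by simp
      ultimately show ?thesis unfolding TTb jj by simp
    qed
    thus ?thesis using mem Rel_R TTa by metis
  qed
qed


lemma step_id:
  assumes x: "a-1 \<le> x" "x < a" "x \<noteq> 0" and D: "DD a (x,y)"
    and q: "(x, y) \<in> Orb b m"
  shows "\<exists>q'. q' \<in> Orb b (Suc m) \<and> Rel (TTalpha a (x,y)) q'"
proof -
  define u where "u = 1/x"
  define k where "k = \<lfloor>u+1-a\<rfloor>"
  have TTa: "TTalpha a (x,y) = (u - k, 1/(y+k))" using TT_eq x(3) by (simp add: u_def k_def)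
  have kf: "of_int k \<le> u+1-a" "u+1-a < of_int k + 1" unfolding k_def by linarith+
  have yk: "y + k \<noteq> 0" "y + k + 1 \<noteq> 0" using ptf[OF x D] unfolding u_def k_def by auto
  define j where "j = \<lfloor>u+1-b\<rfloor>"
  have jf: "of_int j \<le> u+1-b" "u+1-b < of_int j + 1" unfolding j_def by linarith+
  have TTb: "TTalpha b (x,y) = (u - j, 1/(y+j))" using TT_eq x(3) by (simp add: u_def j_def)
  have r1: "real_of_int (j - k) < 1" using jf kf ab by simp
  have r2: "real_of_int (j - k) > -2" using jf kf abf by simp
  have "j - k < 1" using r1 by simp
  moreover have "j - k > -2" using r2 by simp
  ultimately have jk: "j = k \<or> j = k - 1" by linarith
  have mem: "TTalpha b (x,y) \<in> Orb b (Suc m)" using q by (rule Orb_Suc)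
  from jk show ?thesis
  proof
    assume "j = k"
    thus ?thesis using mem Rel_id TTa TTb by metis
  next
    assume h: "j = k - 1"
    have "TTalpha b (x,y) = ((u-k)+1, (1/(y+k))/(1 - 1/(y+k)))"
      unfolding TTb h h_P[OF yk(1)] by simp
    thus ?thesis using mem Rel_P TTa by metis
  qed
qed

lemma step_NEG:
  assumes x: "a-1 \<le> x" "x < a" "x \<noteq> 0" and D: "DD a (x,y)"
    and q: "(-x, -y) \<in> Orb b m"
  shows "\<exists>q'. q' \<in> Orb b (Suc m) \<and> Rel (TTalpha a (x,y)) q'"
proof -
  define u where "u = 1/x"
  define k where "k = \<lfloor>u+1-a\<rfloor>"
  have TTa: "TTalpha a (x,y) = (u - k, 1/(y+k))" using TT_eq x(3) by (simp add: u_def k_def)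
  have kf: "of_int k \<le> u+1-a" "u+1-a < of_int k + 1" unfolding k_def by linarith+
  have yk: "y + k \<noteq> 0" "y + k + 1 \<noteq> 0" using ptf[OF x D] unfolding u_def k_def by auto
  define j where "j = \<lfloor>-u+1-b\<rfloor>"
  have jf: "of_int j \<le> -u+1-b" "-u+1-b < of_int j + 1" unfolding j_def by linarith+
  have qx: "-x \<noteq> 0" using x by simp
  have TTb: "TTalpha b (-x,-y) = (-u - j, 1/(-y+j))"
  proof -
    have fl: "1/(-x) + 1 - b = -u+1-b" by (simp add: u_def)
    have fl2: "1/(-x) = -u" by (simp add: u_def)
    show ?thesis by (simp only: TT_eq[OF qx] fl fl2 j_def)
  qed
  have r1: "real_of_int (j + k) < 1" using jf kf abf by simp
  have r2: "real_of_int (j + k) > -2" using jf kf a2 b1 by simp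
  have "j + k < 1" using r1 by simp
  moreover have "j + k > -2" using r2 by simp
  ultimately have jk: "j = -k \<or> j = -1-k" by linarith
  have mem: "TTalpha b (-x,-y) \<in> Orb b (Suc m)" using q by (rule Orb_Suc)
  from jk show ?thesis
  proof
    assume h: "j = -k"
    have e1: "-y + - of_int k = -(y + of_int k)" by simp
    have e2: "1/(-(y + of_int k)) = -(1/(y + of_int k))" by (rule divide_minus_right)
    have "TTalpha b (-x,-y) = (-(u-k), -(1/(y+k)))"
      unfolding TTb h of_int_minus e1 e2 by simp
    thus ?thesis using mem Rel_NEG TTa by metis
  next
    assume h: "j = -1-k"
    have e1: "-y + (-1 - of_int k) = -(y + of_int k) - 1" by simp
    have "TTalpha b (-x,-y) = (1-(u-k), -(1/(y+k))/(1/(y+k) + 1))"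
      unfolding TTb h of_int_diff of_int_minus of_int_1 e1 h_R[OF yk] by simp
    thus ?thesis using mem Rel_R TTa by metis
  qed
qed

lemma step_G2:
  assumes x: "a-1 \<le> x" "x < a" "x \<noteq> 0" and D: "DD a (x,y)"
    and q: "(x/(x+1), y-1) \<in> Orb b m"
  shows "\<exists>q'. q' \<in> Orb b (Suc m) \<and> Rel (TTalpha a (x,y)) q'"
proof -
  define u where "u = 1/x"
  define k where "k = \<lfloor>u+1-a\<rfloor>"
  have TTa: "TTalpha a (x,y) = (u - k, 1/(y+k))" using TT_eq x(3) by (simp add: u_def k_def)
  have kf: "of_int k \<le> u+1-a" "u+1-a < of_int k + 1" unfolding k_def by linarith+
  have yk: "y + k \<noteq> 0" "y + k + 1 \<noteq> 0" using ptf[OF x D] unfolding u_def k_def by auto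
  have xp1: "x + 1 > 0" using ptf[OF x D] by auto
  have qx: "x/(x+1) \<noteq> 0" using x(3) xp1 by simp
  have inv: "1/(x/(x+1)) = 1 + u" using x(3) xp1 by (simp add: u_def field_simps)
  define j where "j = \<lfloor>u+2-b\<rfloor>"
  have jf: "of_int j \<le> u+2-b" "u+2-b < of_int j + 1" unfolding j_def by linarith+
  have TTb: "TTalpha b (x/(x+1), y-1) = (1+u-j, 1/(y-1+j))"
  proof -
    have fl: "1/(x/(x+1)) + 1 - b = u+2-b" using inv by simp
    have fl2: "1 + u + 1 - b = u+2-b" by simp
    show ?thesis by (simp only: TT_eq[OF qx] fl fl2 inv j_def)
  qed
  have r1: "real_of_int (j - k) < 2" using jf kf ab by simp
  have r2: "real_of_int (j - k) > -1" using jf kf abf by simp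
  have "j - k < 2" using r1 by simp
  moreover have "j - k > -1" using r2 by simp
  ultimately have jk: "j = k + 1 \<or> j = k" by linarith
  have mem: "TTalpha b (x/(x+1), y-1) \<in> Orb b (Suc m)" using q by (rule Orb_Suc)
  from jk show ?thesis
  proof
    assume h: "j = k + 1"
    have "TTalpha b (x/(x+1), y-1) = (u-k, 1/(y+k))" unfolding TTb h by simp
    thus ?thesis using mem Rel_id TTa by metis
  next
    assume h: "j = k"
    have "TTalpha b (x/(x+1), y-1) = ((u-k)+1, (1/(y+k))/(1 - 1/(y+k)))"
      unfolding TTb h h_P[OF yk(1)] by simp
    thus ?thesis using mem Rel_P TTa by metis
  qed
qed

end


context prm begin

lemma step_P:
  assumes x: "a-1 \<le> x" "x < a" "x \<noteq> 0" and D: "DD a (x,y)"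
    and q: "(x+1, y/(1-y)) \<in> Orb b m"
  shows "\<exists>q'. q' \<in> Orb b (Suc (Suc m)) \<and> Rel (TTalpha a (x,y)) q'"
proof -
  have rng: "x + 1 < b" using Orb_range[OF pos(2) b1 q] by simp
  have xn: "x < 0" using rng b1 by simp
  have y1: "y \<le> 2 - sqrt 2" using ptf(4)[OF x D xn] .
  have sq: "sqrt 2 > 141/100" using s2 by auto
  have y1': "1 - y > 0" using y1 sq by linarith
  have xp1: "x + 1 > 0" using ptf(7)[OF x D] .
  have qx: "x + 1 \<noteq> 0" using xp1 by simp
  have i1: "1/1 \<le> 1/(x+1)" using xp1 xn by (intro inv_le_pos) auto
  have i2: "1/(x+1) \<le> 1/a" using x pos by (intro inv_le_pos) auto
  have fl: "\<lfloor>1/(x+1) + 1 - b\<rfloor> = 1" unfolding floor_eq_iff using i1 i2 abf b1 by simp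
  have e1: "1/(x+1) - 1 = -x/(x+1)" using qx by (simp add: field_simps)
  have e2: "1/(y/(1-y) + 1) = 1 - y"
  proof -
    have "y/(1-y) + 1 = 1/(1-y)" using y1' by (simp add: field_simps)
    thus ?thesis by simp
  qed
  have TTb: "TTalpha b (x+1, y/(1-y)) = (-x/(x+1), 1-y)"
    by (simp only: TT_eq[OF qx] fl of_int_1 e1 e2)
  have mem: "(-x/(x+1), 1-y) \<in> Orb b (Suc m)" using Orb_Suc[OF q] unfolding TTb .
  show ?thesis using G1core[OF x D mem] .
qed

lemma step_R:
  assumes x: "a-1 \<le> x" "x < a" "x \<noteq> 0" and D: "DD a (x,y)"
    and q: "(1-x, -y/(y+1)) \<in> Orb b m"
  shows "\<exists>m' q'. m' \<le> Suc (Suc m) \<and> q' \<in> Orb b m' \<and> Rel (TTalpha a (x,y)) q'"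
proof -
  have rng: "b - 1 \<le> 1 - x" "1 - x < b" using Orb_range[OF pos(2) b1 q] by auto
  have xp: "x > 0" using rng b1 by simp
  have x1: "1 - x > 0" "1 - x \<le> 1" using x a2 xp by auto
  define u where "u = 1/x"
  define k where "k = \<lfloor>u+1-a\<rfloor>"
  have up: "u > 0" using xp by (simp add: u_def)
  have xu: "x = 1/u" by (simp add: u_def)
  have TTa: "TTalpha a (x,y) = (u - k, 1/(y+k))" using TT_eq x(3) by (simp add: u_def k_def)
  have kf: "of_int k \<le> u+1-a" "u+1-a < of_int k + 1" unfolding k_def by linarith+
  have yk: "y + k \<noteq> 0" "y + k + 1 \<noteq> 0" using ptf[OF x D] unfolding u_def k_def by auto
  have k1: "k \<ge> 1" using ptf(3)[OF x D xp] unfolding u_def k_def .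
  have yb: "-1/2 \<le> y" "y \<le> sqrt 2" using ptf[OF x D] by auto
  have qx: "1 - x \<noteq> 0" using x1 by simp
  have yp1: "y + 1 \<noteq> 0" "y + 2 \<noteq> 0" "y + 1 > 0" "y + 2 > 0" using yb by auto
  show ?thesis
  proof (cases "x < b/(1+b)")
    case True
    have i1: "1/1 \<le> 1/(1-x)" using x1 by (intro inv_le_pos) auto
    have "x*(1+b) < b" using True pos by (simp add: field_simps)
    hence "1 < (1+b)*(1-x)" by (simp add: algebra_simps)
    hence i2: "1/(1-x) < 1+b" using x1 by (simp add: divide_less_eq)
    have fl: "\<lfloor>1/(1-x) + 1 - b\<rfloor> = 1" unfolding floor_eq_iff using i1 i2 b1 by simp
    have e1: "1/(1-x) - 1 = x/(1-x)" using qx by (simp add: field_simps)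
    have e2: "1/(-y/(y+1) + 1) = y + 1"
    proof -
      have "-y/(y+1) + 1 = 1/(y+1)" using yp1 by (simp add: field_simps)
      thus ?thesis by simp
    qed
    have TT1: "TTalpha b (1-x, -y/(y+1)) = (x/(1-x), y+1)"
      by (simp only: TT_eq[OF qx] fl of_int_1 e1 e2)
    have mem1: "(x/(1-x), y+1) \<in> Orb b (Suc m)" using Orb_Suc[OF q] unfolding TT1 .
    have qx1: "x/(1-x) \<noteq> 0" using xp x1 by simp
    have inv: "1/(x/(1-x)) = u - 1" using xp qx by (simp add: u_def field_simps)
    define j where "j = \<lfloor>u-b\<rfloor>"
    have jf: "of_int j \<le> u-b" "u-b < of_int j + 1" unfolding j_def by linarith+
    have TT2: "TTalpha b (x/(1-x), y+1) = (u-1-j, 1/(y+1+j))"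
    proof -
      have fl1: "1/(x/(1-x)) + 1 - b = u-b" using inv by simp
      have fl2: "u - 1 + 1 - b = u-b" by simp
      show ?thesis by (simp only: TT_eq[OF qx1] fl1 fl2 inv j_def)
    qed
    have mem2: "TTalpha b (x/(1-x), y+1) \<in> Orb b (Suc (Suc m))" using mem1 by (rule Orb_Suc)
    have r1: "real_of_int (j - k) < 0" using jf kf ab by simp
    have r2: "real_of_int (j - k) > -3" using jf kf abf by simp
    have "j - k < 0" using r1 by simp
    moreover have "j - k > -3" using r2 by simp
    ultimately have jk: "j = k - 1 \<or> j = k - 2" by linarith
    from jk show ?thesis
    proof
      assume h: "j = k - 1"
      have "TTalpha b (x/(1-x), y+1) = (u-k, 1/(y+k))" unfolding TT2 h by simp
      thus ?thesis using mem2 Rel_id TTa by (metis order_refl)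
    next
      assume h: "j = k - 2"
      have "TTalpha b (x/(1-x), y+1) = ((u-k)+1, (1/(y+k))/(1 - 1/(y+k)))"
        unfolding TT2 h h_P[OF yk(1)] by simp
      thus ?thesis using mem2 Rel_P TTa by (metis order_refl)
    qed
  next
    case False
    hence xb: "x \<ge> b/(1+b)" by simp
    have "1/x \<le> 1/(b/(1+b))" using xb pos by (intro inv_le_pos) auto
    hence ub: "u \<le> 1 + 1/b" using pos by (simp add: u_def field_simps)
    have "real_of_int k < 3" using kf ub abf by linarith
    hence "k < 3" by simp
    hence k12: "k = 1 \<or> k = 2" using k1 by linarith
    have cc2: "1/(2 + sqrt 2) \<le> 1/(y+2)" using yb yp1 by (intro inv_le_pos) auto
    have cc1: "1/(2 + sqrt 2) \<le> 1/(y+1)" using yb yp1 by (intro inv_le_pos) auto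
    from k12 show ?thesis
    proof
      assume h: "k = 1"
      have e1: "1 - x = (u-1)/((u-1)+1)" using up by (simp add: xu field_simps)
      have e2: "-y/(y+1) = 1/(y+1) - 1" using yp1 by (simp add: field_simps)
      have "Rel (TTalpha a (x,y)) (1-x, -y/(y+1))" unfolding TTa h e1 e2 using Rel_G2[of "1/(y+1)" "u-1"] cc1 cc_eq by simp
      thus ?thesis using q by (metis le_SucI order_refl)
    next
      assume h: "k = 2"
      have "2 \<le> u + 1 - a" using kf h by simp
      hence "1 + a \<le> u" by simp
      hence "1/u \<le> 1/(1+a)" using pos by (intro inv_le_pos) auto
      hence xa: "x \<le> 1/(1+a)" using xu by simp
      have "1 - x \<ge> a/(1+a)"
      proof -
        have "1 - 1/(1+a) = a/(1+a)" using pos by (simp add: field_simps)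
        thus ?thesis using xa by linarith
      qed
      hence "1/(1-x) \<le> 1/(a/(1+a))" using pos by (intro inv_le_pos) auto
      hence i2: "1/(1-x) \<le> 1 + 1/a" using pos by (simp add: field_simps)
      have "1 - x \<le> 1/(1+b)"
      proof -
        have "1 - b/(1+b) = 1/(1+b)" using pos by (simp add: field_simps)
        thus ?thesis using xb by linarith
      qed
      hence "1/(1/(1+b)) \<le> 1/(1-x)" using x1 by (intro inv_le_pos) auto
      hence i1: "1 + b \<le> 1/(1-x)" by simp
      have fl: "\<lfloor>1/(1-x) + 1 - b\<rfloor> = 2" unfolding floor_eq_iff using i1 i2 abf by simp
      have u1: "u - 2 + 1 \<noteq> 0" using up xu x1 by (auto simp: field_simps)
      have e1: "1/(1-x) - 2 = -(u-2)/((u-2)+1)"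
      proof -
        have "-(u-2)/((u-2)+1) = (2*x - 1)/(1-x)" using xp qx by (simp add: u_def field_simps)
        moreover have "1/(1-x) - 2 = (2*x - 1)/(1-x)" using qx by (simp add: field_simps)
        ultimately show ?thesis by simp
      qed
      have e2: "1/(-y/(y+1) + 2) = 1 - 1/(y+2)" using yp1 by (simp add: field_simps)
      have TT1: "TTalpha b (1-x, -y/(y+1)) = (-(u-2)/((u-2)+1), 1 - 1/(y+2))"
        by (simp only: TT_eq[OF qx] fl e1 e2 of_int_numeral)
      have mem1: "TTalpha b (1-x, -y/(y+1)) \<in> Orb b (Suc m)" using q by (rule Orb_Suc)
      have "Rel (TTalpha a (x,y)) (TTalpha b (1-x, -y/(y+1)))" unfolding TTa h TT1 of_int_numeral
        by (rule Rel_G1) (use cc2 cc_eq in simp)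
      thus ?thesis using mem1 by (metis le_SucI order_refl)
    qed
  qed
qed

end


context prm begin

lemma step_good:
  assumes x: "a-1 \<le> fst p" "fst p < a" and D: "DD a p"
    and g: "\<exists>m q. m \<le> 2*n \<and> q \<in> Orb b m \<and> Rel p q"
  shows "\<exists>m q. m \<le> 2*Suc n \<and> q \<in> Orb b m \<and> Rel (TTalpha a p) q"
proof -
  obtain x y where p: "p = (x,y)" by fastforce
  show ?thesis
  proof (cases "x = 0")
    case True
    have "TTalpha a p = (0,0)" unfolding p True by (rule TT_zero)
    thus ?thesis using zero_Orb[OF pos(2) b1] Rel_id by (metis le0)
  next
    case False
    have xx: "a-1 \<le> x" "x < a" "x \<noteq> 0" using x False p by auto
    have DD: "DD a (x,y)" using D p by simp
    from g obtain m q where m: "m \<le> 2*n" and q: "q \<in> Orb b m" and r: "Rel (x,y) q" using p by auto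
    from r have "q = (x,y) \<or> q = (-x,-y) \<or> q = (x+1, y/(1-y)) \<or> q = (1-x, -y/(y+1))
       \<or> q = (-x/(x+1), 1-y) \<or> q = (x/(x+1), y-1)" unfolding Rel_def by auto
    hence "\<exists>m' q'. m' \<le> Suc (Suc m) \<and> q' \<in> Orb b m' \<and> Rel (TTalpha a (x,y)) q'"
    proof (elim disjE)
      assume "q = (x,y)" thus ?thesis using step_id[OF xx DD] q by (metis le_SucI order_refl)
    next
      assume "q = (-x,-y)" thus ?thesis using step_NEG[OF xx DD] q by (metis le_SucI order_refl)
    next
      assume "q = (x+1, y/(1-y))" thus ?thesis using step_P[OF xx DD] q by (metis order_refl)
    next
      assume "q = (1-x, -y/(y+1))" thus ?thesis using step_R[OF xx DD] q by metis
    next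
      assume "q = (-x/(x+1), 1-y)" thus ?thesis using G1core[OF xx DD] q by (metis le_SucI order_refl)
    next
      assume "q = (x/(x+1), y-1)" thus ?thesis using step_G2[OF xx DD] q by (metis le_SucI order_refl)
    qed
    then obtain m' q' where "m' \<le> Suc (Suc m)" "q' \<in> Orb b m'" "Rel (TTalpha a (x,y)) q'" by blast
    moreover have "Suc (Suc m) \<le> 2 * Suc n" using m by simp
    ultimately show ?thesis unfolding p by (meson le_trans)
  qed
qed

lemma orbit:
  assumes x0: "a-1 \<le> x0" "x0 < a"
  shows "a-1 \<le> fst ((TTalpha a ^^ n) (x0,0)) \<and> fst ((TTalpha a ^^ n) (x0,0)) < a
     \<and> DD a ((TTalpha a ^^ n) (x0,0))
     \<and> (\<exists>m q. m \<le> 2*n \<and> q \<in> Orb b m \<and> Rel ((TTalpha a ^^ n) (x0,0)) q)"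
proof (induction n)
  case 0
  have sq: "sqrt 2 > 141/100" "sqrt 2 < 142/100" "1/sqrt 2 < 71/100" using s2 s2id(4) by auto
  have D0: "DD a (x0, 0)" unfolding DD_def using sq by auto
  have g0: "\<exists>m q. m \<le> 2*0 \<and> q \<in> Orb b m \<and> Rel (x0,0) q"
  proof (cases "x0 \<ge> b - 1")
    case True
    have "(x0,0) \<in> Orb b 0" using True x0 ab by (simp add: Orb_def Bs_def)
    thus ?thesis using Rel_id by blast
  next
    case False
    have "(x0+1,0) \<in> Orb b 0" using False x0 ab b1 a1 by (simp add: Orb_def Bs_def)
    moreover have "Rel (x0,0) (x0+1, 0)" using Rel_P[of x0 0] by simp
    ultimately show ?thesis by blast
  qed
  show ?case using x0 D0 g0 by simp
next
  case (Suc n)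
  let ?p = "(TTalpha a ^^ n) (x0,0)"
  have e: "(TTalpha a ^^ Suc n) (x0,0) = TTalpha a ?p" by simp
  have r: "fst (TTalpha a ?p) \<in> {a-1..<a}" using TT_range pos a2 by simp
  obtain x y where p: "?p = (x,y)" by fastforce
  have D: "DD a (TTalpha a ?p)" using D_step[OF a1 a2 a3, of x y] Suc.IH p by simp
  have g: "\<exists>m q. m \<le> 2*Suc n \<and> q \<in> Orb b m \<and> Rel (TTalpha a ?p) q"
    using step_good Suc.IH by blast
  show ?case unfolding e using r D g by simp
qed

end


lemma closure_finite_Union: "finite F \<Longrightarrow> closure (\<Union>F) \<subseteq> \<Union>(closure ` F)"
proof -
  assume f: "finite F"
  have "\<Union>F \<subseteq> \<Union>(closure ` F)" using closure_subset by blast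
  moreover have "closed (\<Union>(closure ` F))" using f by (intro closed_Union) auto
  ultimately show ?thesis by (rule closure_minimal)
qed

theorem lemma4p5:
  fixes \<alpha> \<beta> x y :: real
  assumes "(sqrt 5 - 1) / 2 \<le> \<alpha>" and "\<alpha> < \<beta>" and "\<beta> \<le> 1"
    and "(x, y) \<in> Omega \<alpha>" and "y < 1 - 1 / sqrt 2"
  shows "Sset x y \<inter> Omega \<beta> \<noteq> {}"
proof -
  have a3: "\<alpha>*\<alpha>+\<alpha> \<ge> 1" using assms(1) by (rule sq5)
  have s5: "sqrt 5 > 1" by simp
  have "(sqrt 5 - 1)/2 > 0" using s5 by simp
  hence apos: "\<alpha> > 0" using assms(1) by linarith
  have a1: "\<alpha> \<ge> 309/500" using g_bound a3 apos by blast
  have a2: "\<alpha> < 1" using assms(2,3) by simp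
  interpret P: prm \<alpha> \<beta> using a1 a2 a3 assms(2,3) by unfold_locales
  obtain n where xn: "(x,y) \<in> closure ((TTalpha \<alpha> ^^ n) ` ({\<alpha>-1..<\<alpha>} \<times> {0}))"
    using assms(4) unfolding Omega_def by auto
  define A where "A = (TTalpha \<alpha> ^^ n) ` ({\<alpha>-1..<\<alpha>} \<times> {0})"
  define S where "S = {p::real\<times>real. snd p < cc}"
  have oS: "open S" unfolding S_def by (intro open_Collect_less continuous_intros)
  have xS: "(x,y) \<in> S" using assms(5) by (simp add: S_def cc_def)
  have xSA: "(x,y) \<in> closure (S \<inter> A)" using open_Int_closure_subset[OF oS] xS xn A_def by blast
  define fs :: "(real\<times>real \<Rightarrow> real\<times>real) set" where
    "fs = {\<lambda>p. p, \<lambda>p. (-fst p, -snd p), \<lambda>p. (fst p + 1, snd p/(1 - snd p)), \<lambda>p. (1 - fst p, - snd p/(snd p + 1))}"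
  define Fam where "Fam = (\<lambda>(f,m). {p \<in> S \<inter> A. f p \<in> Orb \<beta> m}) ` (fs \<times> {..2*n})"
  have finF: "finite Fam" unfolding Fam_def fs_def by simp
  have Apt: "\<And>p. p \<in> A \<Longrightarrow> DD \<alpha> p \<and> (\<exists>m q. m \<le> 2*n \<and> q \<in> Orb \<beta> m \<and> Rel p q)"
  proof -
    fix p assume "p \<in> A"
    then obtain x0 where x0: "\<alpha>-1 \<le> x0" "x0 < \<alpha>" and p: "p = (TTalpha \<alpha> ^^ n) (x0,0)"
      unfolding A_def by auto
    show "DD \<alpha> p \<and> (\<exists>m q. m \<le> 2*n \<and> q \<in> Orb \<beta> m \<and> Rel p q)" using P.orbit[OF x0, of n] p by simp
  qed
  have cover: "S \<inter> A \<subseteq> \<Union>Fam"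
  proof
    fix p assume pSA: "p \<in> S \<inter> A"
    then obtain m q where m: "m \<le> 2*n" and q: "q \<in> Orb \<beta> m" and r: "Rel p q" using Apt by blast
    have "snd p < cc" using pSA by (simp add: S_def)
    hence "\<exists>f\<in>fs. q = f p" using r unfolding Rel_def fs_def by auto
    then obtain f where "f \<in> fs" "q = f p" by blast
    hence "p \<in> {p \<in> S \<inter> A. f p \<in> Orb \<beta> m}" and "(f,m) \<in> fs \<times> {..2*n}" using pSA q m by auto
    thus "p \<in> \<Union>Fam" unfolding Fam_def by blast
  qed
  have "closure (S \<inter> A) \<subseteq> \<Union>(closure ` Fam)"
    using closure_mono[OF cover] closure_finite_Union[OF finF] by blast
  with xSA obtain f m where fm: "f \<in> fs" "m \<le> 2*n"
    and xY: "(x,y) \<in> closure {p \<in> S \<inter> A. f p \<in> Orb \<beta> m}"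
    unfolding Fam_def by auto
  define Y where "Y = {p \<in> S \<inter> A. f p \<in> Orb \<beta> m}"
  define K where "K = {p::real\<times>real. -1/2 \<le> snd p \<and> snd p \<le> cc}"
  have cK: "closed K" unfolding K_def by (intro closed_Collect_conj closed_Collect_le continuous_intros)
  have YK: "Y \<subseteq> K"
  proof
    fix p assume "p \<in> Y"
    hence "p \<in> A" "snd p < cc" by (auto simp: Y_def S_def)
    thus "p \<in> K" using Apt unfolding K_def DD_def by auto
  qed
  have cYK: "closure Y \<subseteq> K" using YK cK by (rule closure_minimal)
  have cc1: "cc < 1" by (simp add: cc_def)
  have contK: "continuous_on K f"
  proof -
    have "\<forall>p\<in>K. 1 - snd p \<noteq> 0" "\<forall>p\<in>K. snd p + 1 \<noteq> 0" using cc1 unfolding K_def by auto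
    thus ?thesis using fm(1) unfolding fs_def by (auto intro!: continuous_intros)
  qed
  have "f ` closure Y \<subseteq> closure (Orb \<beta> m)"
    by (rule image_closure_subset[OF continuous_on_subset[OF contK cYK] closed_closure])
       (use closure_subset[of "Orb \<beta> m"] in \<open>auto simp: Y_def\<close>)
  hence fx: "f (x,y) \<in> closure (Orb \<beta> m)" using xY Y_def by blast
  have "closure (Orb \<beta> m) \<subseteq> Omega \<beta>" unfolding Omega_def Orb_def Bs_def by blast
  hence "f (x,y) \<in> Omega \<beta>" using fx by blast
  moreover have "f (x,y) \<in> Sset x y" using fm(1) unfolding fs_def Sset_def by auto
  ultimately show ?thesis by blast
qed


end
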